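(* Define integer matrices $(a(i,j))_{i,j\ge1}$ and $(b(i,j))_{i,j\ge1}$ as follows. The first three rows are (entries listed for $j=1,2,\dots$; all further entries in these rows are $0$): \begin{itemize} \item $a(1,\cdot)=(10,-36,27)$; $a(2,\cdot)=(-8,306,-2160,5508,-5832,2187)$; $a(3,\cdot)=(1,-360,10566,-99144,423549,-944784,1141614,-708588,177147)$; \item $b(1,\cdot)=(-9,252,-891,729)$; $b(2,\cdot)=(1,-378,8613,-54675,138510,-150903,59049)$; $b(3,\cdot)=(0,147,-14553,312255,-2617839,10764414,-23914845,29288304,-18600435,4782969)$. \end{itemize} For $i\ge4$ and $j\ge1$, both $m=a$ and $m=b$ satisfy $$m(i,j)=30m(i-1,j-1)-108m(i-1,j-2)+81m(i-1,j-3)-12m(i-2,j-1)+9m(i-2,j-2)+m(i-3,j-1),$$ with $m(i,j)=0$ whenever $j\le0$. Let $t(i,j)=\sum_{k\ge1}a(i,k)b(k,j)$ for $i,j\ge1$ (a finite sum). Then for all $i,j\ge1$, $$\pi(t(i,j))\ge\min_{k\ge1}\{\pi(a(i,k))+\pi(b(k,j))\}\ge\min_{k\ge1}\left\{\left\lfloor\frac{3k-i-1}{2}\right\rfloor+\left\lfloor\frac{3j-k}{2}\right\rfloor\right\}.$$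
   Context: For an integer $n$, $\pi(n)$ denotes the $3$-adic order of $n$, with the convention $\pi(0)=\infty$. $\lfloor x\rfloor$ is the largest integer not exceeding $x$. *)

theory Defs
  imports Complex_Main "HOL-Computational_Algebra.Computational_Algebra" "HOL-Library.Extended_Real"
begin

text \<open>Column index 0 always gives 0 (this encodes m(i,j) = 0 for j <= 0, since natural-number
  subtraction j - d truncates to 0 when j <= d).\<close>

definition row :: "int list \<Rightarrow> nat \<Rightarrow> int" where
  "row xs j = (if 1 \<le> j \<and> j \<le> length xs then xs ! (j - 1) else 0)"

fun ma :: "nat \<Rightarrow> nat \<Rightarrow> int" where
  "ma 0 j = 0"
| "ma (Suc 0) j = row [10, -36, 27] j"
| "ma (Suc (Suc 0)) j = row [-8, 306, -2160, 5508, -5832, 2187] j"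
| "ma (Suc (Suc (Suc 0))) j =
     row [1, -360, 10566, -99144, 423549, -944784, 1141614, -708588, 177147] j"
| "ma (Suc (Suc (Suc (Suc n)))) j =
     (if j = 0 then 0 else
        30 * ma (n + 3) (j - 1) - 108 * ma (n + 3) (j - 2) + 81 * ma (n + 3) (j - 3)
      - 12 * ma (n + 2) (j - 1) + 9 * ma (n + 2) (j - 2) + ma (n + 1) (j - 1))"

fun mb :: "nat \<Rightarrow> nat \<Rightarrow> int" where
  "mb 0 j = 0"
| "mb (Suc 0) j = row [-9, 252, -891, 729] j"
| "mb (Suc (Suc 0)) j = row [1, -378, 8613, -54675, 138510, -150903, 59049] j"
| "mb (Suc (Suc (Suc 0))) j =
     row [0, 147, -14553, 312255, -2617839, 10764414, -23914845, 29288304, -18600435, 4782969] j"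
| "mb (Suc (Suc (Suc (Suc n)))) j =
     (if j = 0 then 0 else
        30 * mb (n + 3) (j - 1) - 108 * mb (n + 3) (j - 2) + 81 * mb (n + 3) (j - 3)
      - 12 * mb (n + 2) (j - 1) + 9 * mb (n + 2) (j - 2) + mb (n + 1) (j - 1))"

definition mt :: "nat \<Rightarrow> nat \<Rightarrow> int" where
  "mt i j = (\<Sum>k \<in> {k. 1 \<le> k \<and> ma i k * mb k j \<noteq> 0}. ma i k * mb k j)"

definition pi3 :: "int \<Rightarrow> ereal" where
  "pi3 n = (if n = 0 then \<infinity> else ereal (real (multiplicity (3::int) n)))"

end

theory Submission
  imports Defs
begin

lemma term_dvd:
  fixes x c :: int
  assumes "\<forall>e::nat. int e \<le> B \<longrightarrow> 3^e dvd x" and "3^p dvd c" and "A \<le> B + int p"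
  shows "\<forall>e::nat. int e \<le> A \<longrightarrow> 3^e dvd c*x"
proof (intro allI impI)
  fix e :: nat assume e: "int e \<le> A"
  show "3^e dvd c*x"
  proof (cases "e \<le> p")
    case True
    then have "(3::int)^e dvd 3^p" by (simp add: le_imp_power_dvd)
    then show ?thesis using assms(2) by (meson dvd_trans dvd_mult2)
  next
    case False
    then have "int (e - p) \<le> B" using e assms(3) by linarith
    then have "3^(e-p) dvd x" using assms(1) by blast
    moreover have "(3::int)^e = 3^p * 3^(e-p)" using False by (simp flip: power_add)
    ultimately show ?thesis using assms(2) by (simp add: mult_dvd_mono)
  qed
qed

lemma row_dvd:
  fixes xs :: "int list"
  assumes "\<forall>j. 1 \<le> j \<and> j \<le> length xs \<longrightarrow> (3::int)^(nat (f j)) dvd xs ! (j - 1)"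
  shows "\<forall>e::nat. int e \<le> f j \<longrightarrow> 3^e dvd row xs j"
proof (intro allI impI)
  fix e :: nat assume e: "int e \<le> f j"
  show "3^e dvd row xs j"
  proof (cases "1 \<le> j \<and> j \<le> length xs")
    case True
    have "(3::int)^e dvd 3^(nat (f j))" using e by (intro le_imp_power_dvd) linarith
    then show ?thesis using True assms by (auto simp: row_def intro: dvd_trans)
  next
    case False
    then show ?thesis by (auto simp: row_def)
  qed
qed

lemma ma0': "j = 0 \<Longrightarrow> ma i j = 0"
  by (induction i j rule: ma.induct) (simp_all add: row_def)
lemma mb0': "j = 0 \<Longrightarrow> mb i j = 0"
  by (induction i j rule: mb.induct) (simp_all add: row_def)
lemma ma0[simp]: "ma i 0 = 0" by (simp add: ma0')
lemma mb0[simp]: "mb i 0 = 0" by (simp add: mb0')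

lemma allj: "(\<forall>j. 1 \<le> j \<and> j \<le> n \<longrightarrow> P j) = (\<forall>k<n. P (Suc k))"
proof
  assume "\<forall>j. 1 \<le> j \<and> j \<le> n \<longrightarrow> P j" then show "\<forall>k<n. P (Suc k)" by auto
next
  assume H: "\<forall>k<n. P (Suc k)"
  show "\<forall>j. 1 \<le> j \<and> j \<le> n \<longrightarrow> P j"
  proof (intro allI impI)
    fix j assume "1 \<le> j \<and> j \<le> n"
    then have "j - 1 < n" and "j = Suc (j - 1)" by auto
    then show "P j" using H by metis
  qed
qed

lemma all_lt_Suc: "(\<forall>k<Suc n. P k) = (P n \<and> (\<forall>k<n. P k))"
  using less_Suc_eq by auto
lemma all_lt_0: "(\<forall>k<0::nat. P k) = True" by simp

lemma rows_a1:
  "\<forall>e::nat. int e \<le> (3*int j - 1 - 1) div 2 \<longrightarrow> 3^e dvd ma (Suc 0) j"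
  apply simp
  apply (rule row_dvd)
  apply (unfold allj)
  apply (simp add: numeral_eq_Suc)
  apply (simp only: all_lt_Suc all_lt_0)
  apply simp
  done

lemma rows_a2:
  "\<forall>e::nat. int e \<le> (3*int j - 2 - 1) div 2 \<longrightarrow> 3^e dvd ma (Suc (Suc 0)) j"
  apply simp
  apply (rule row_dvd)
  apply (unfold allj)
  apply (simp add: numeral_eq_Suc)
  apply (simp only: all_lt_Suc all_lt_0)
  apply simp
  done

lemma rows_a3:
  "\<forall>e::nat. int e \<le> (3*int j - 3 - 1) div 2 \<longrightarrow> 3^e dvd ma (Suc (Suc (Suc 0))) j"
  apply simp
  apply (rule row_dvd)
  apply (unfold allj)
  apply (simp add: numeral_eq_Suc)
  apply (simp only: all_lt_Suc all_lt_0)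
  apply simp
  done

lemma rows_b1:
  "\<forall>e::nat. int e \<le> (3*int j - 1) div 2 \<longrightarrow> 3^e dvd mb (Suc 0) j"
  apply simp
  apply (rule row_dvd)
  apply (unfold allj)
  apply (simp add: numeral_eq_Suc)
  apply (simp only: all_lt_Suc all_lt_0)
  apply simp
  done

lemma rows_b2:
  "\<forall>e::nat. int e \<le> (3*int j - 2) div 2 \<longrightarrow> 3^e dvd mb (Suc (Suc 0)) j"
  apply simp
  apply (rule row_dvd)
  apply (unfold allj)
  apply (simp add: numeral_eq_Suc)
  apply (simp only: all_lt_Suc all_lt_0)
  apply simp
  done

lemma rows_b3:
  "\<forall>e::nat. int e \<le> (3*int j - 3) div 2 \<longrightarrow> 3^e dvd mb (Suc (Suc (Suc 0))) j"
  apply simp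
  apply (rule row_dvd)
  apply (unfold allj)
  apply (simp add: numeral_eq_Suc)
  apply (simp only: all_lt_Suc all_lt_0)
  apply simp
  done

definition D :: "int \<Rightarrow> int \<Rightarrow> bool" where
  "D A x \<longleftrightarrow> (\<forall>e::nat. int e \<le> A \<longrightarrow> 3^e dvd x)"

lemma D_add: "D A x \<Longrightarrow> D A y \<Longrightarrow> D A (x + y)"
  unfolding D_def by auto
lemma D_diff: "D A x \<Longrightarrow> D A y \<Longrightarrow> D A (x - y)"
  unfolding D_def by auto

lemma termD:
  fixes x c :: int and d j :: nat
  assumes "d \<le> j \<Longrightarrow> D B x" "j < d \<Longrightarrow> x = 0" "3^p dvd c" "d \<le> j \<Longrightarrow> A \<le> B + int p"
  shows "D A (c*x)"
proof (cases "d \<le> j")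
  case True
  then show ?thesis using term_dvd[of B x p c A] assms unfolding D_def by blast
next
  case False
  then have "x = 0" using assms(2) by simp
  then show ?thesis unfolding D_def by simp
qed

lemma a_dvd: "1 \<le> i \<Longrightarrow> D ((3*int j - int i - 1) div 2) (ma i j)"
proof (induction i j rule: ma.induct)
  case (1 j)
  then show ?case by simp
next
  case (2 j)
  then show ?case using rows_a1[of j] unfolding D_def by simp
next
  case (3 j)
  then show ?case using rows_a2[of j] unfolding D_def by simp
next
  case (4 j)
  then show ?case using rows_a3[of j] unfolding D_def by simp
next
  case (5 n j)
  show ?case
  proof (cases "j = 0")
    case True
    then show ?thesis unfolding D_def by simp
  next
    case False
    let ?A = "(3*int j - int (Suc (Suc (Suc (Suc n)))) - 1) div 2"
    have t1: "D ?A (30 * ma (n + 3) (j - 1))"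
    proof (rule termD[where d=1 and p=1 and B="(3*int (j-1) - int (n + 3) - 1) div 2"])
      show "1 \<le> j \<Longrightarrow> D ((3*int (j-1) - int (n + 3) - 1) div 2) (ma (n + 3) (j - 1))"
        using 5 False by simp
      show "j < 1 \<Longrightarrow> ma (n + 3) (j - 1) = 0" by simp
      show "3 ^ 1 dvd (30::int)" by simp
      show "1 \<le> j \<Longrightarrow> ?A \<le> (3*int (j-1) - int (n + 3) - 1) div 2 + int 1"
        by presburger
    qed
    have t2: "D ?A (108 * ma (n + 3) (j - 2))"
    proof (rule termD[where d=2 and p=3 and B="(3*int (j-2) - int (n + 3) - 1) div 2"])
      show "2 \<le> j \<Longrightarrow> D ((3*int (j-2) - int (n + 3) - 1) div 2) (ma (n + 3) (j - 2))"
        using 5 False by simp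
      show "j < 2 \<Longrightarrow> ma (n + 3) (j - 2) = 0" by simp
      show "3 ^ 3 dvd (108::int)" by simp
      show "2 \<le> j \<Longrightarrow> ?A \<le> (3*int (j-2) - int (n + 3) - 1) div 2 + int 3"
        by presburger
    qed
    have t3: "D ?A (81 * ma (n + 3) (j - 3))"
    proof (rule termD[where d=3 and p=4 and B="(3*int (j-3) - int (n + 3) - 1) div 2"])
      show "3 \<le> j \<Longrightarrow> D ((3*int (j-3) - int (n + 3) - 1) div 2) (ma (n + 3) (j - 3))"
        using 5 False by simp
      show "j < 3 \<Longrightarrow> ma (n + 3) (j - 3) = 0" by simp
      show "3 ^ 4 dvd (81::int)" by simp
      show "3 \<le> j \<Longrightarrow> ?A \<le> (3*int (j-3) - int (n + 3) - 1) div 2 + int 4"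
        by presburger
    qed
    have t4: "D ?A (12 * ma (n + 2) (j - 1))"
    proof (rule termD[where d=1 and p=1 and B="(3*int (j-1) - int (n + 2) - 1) div 2"])
      show "1 \<le> j \<Longrightarrow> D ((3*int (j-1) - int (n + 2) - 1) div 2) (ma (n + 2) (j - 1))"
        using 5 False by simp
      show "j < 1 \<Longrightarrow> ma (n + 2) (j - 1) = 0" by simp
      show "3 ^ 1 dvd (12::int)" by simp
      show "1 \<le> j \<Longrightarrow> ?A \<le> (3*int (j-1) - int (n + 2) - 1) div 2 + int 1"
        by presburger
    qed
    have t5: "D ?A (9 * ma (n + 2) (j - 2))"
    proof (rule termD[where d=2 and p=2 and B="(3*int (j-2) - int (n + 2) - 1) div 2"])
      show "2 \<le> j \<Longrightarrow> D ((3*int (j-2) - int (n + 2) - 1) div 2) (ma (n + 2) (j - 2))"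
        using 5 False by simp
      show "j < 2 \<Longrightarrow> ma (n + 2) (j - 2) = 0" by simp
      show "3 ^ 2 dvd (9::int)" by simp
      show "2 \<le> j \<Longrightarrow> ?A \<le> (3*int (j-2) - int (n + 2) - 1) div 2 + int 2"
        by presburger
    qed
    have t6: "D ?A (1 * ma (n + 1) (j - 1))"
    proof (rule termD[where d=1 and p=0 and B="(3*int (j-1) - int (n + 1) - 1) div 2"])
      show "1 \<le> j \<Longrightarrow> D ((3*int (j-1) - int (n + 1) - 1) div 2) (ma (n + 1) (j - 1))"
        using 5 False by simp
      show "j < 1 \<Longrightarrow> ma (n + 1) (j - 1) = 0" by simp
      show "3 ^ 0 dvd (1::int)" by simp
      show "1 \<le> j \<Longrightarrow> ?A \<le> (3*int (j-1) - int (n + 1) - 1) div 2 + int 0"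
        by presburger
    qed
    have "D ?A (30 * ma (n + 3) (j - 1) - 108 * ma (n + 3) (j - 2) + 81 * ma (n + 3) (j - 3)
      - 12 * ma (n + 2) (j - 1) + 9 * ma (n + 2) (j - 2) + 1 * ma (n + 1) (j - 1))"
      by (intro D_add D_diff t1 t2 t3 t4 t5 t6)
    then show ?thesis using False by simp
  qed
qed

lemma b_dvd: "1 \<le> i \<Longrightarrow> D ((3*int j - int i) div 2) (mb i j)"
proof (induction i j rule: mb.induct)
  case (1 j)
  then show ?case by simp
next
  case (2 j)
  then show ?case using rows_b1[of j] unfolding D_def by simp
next
  case (3 j)
  then show ?case using rows_b2[of j] unfolding D_def by simp
next
  case (4 j)
  then show ?case using rows_b3[of j] unfolding D_def by simp
next
  case (5 n j)
  show ?case
  proof (cases "j = 0")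
    case True
    then show ?thesis unfolding D_def by simp
  next
    case False
    let ?A = "(3*int j - int (Suc (Suc (Suc (Suc n))))) div 2"
    have t1: "D ?A (30 * mb (n + 3) (j - 1))"
    proof (rule termD[where d=1 and p=1 and B="(3*int (j-1) - int (n + 3)) div 2"])
      show "1 \<le> j \<Longrightarrow> D ((3*int (j-1) - int (n + 3)) div 2) (mb (n + 3) (j - 1))"
        using 5 False by simp
      show "j < 1 \<Longrightarrow> mb (n + 3) (j - 1) = 0" by simp
      show "3 ^ 1 dvd (30::int)" by simp
      show "1 \<le> j \<Longrightarrow> ?A \<le> (3*int (j-1) - int (n + 3)) div 2 + int 1"
        by presburger
    qed
    have t2: "D ?A (108 * mb (n + 3) (j - 2))"
    proof (rule termD[where d=2 and p=3 and B="(3*int (j-2) - int (n + 3)) div 2"])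
      show "2 \<le> j \<Longrightarrow> D ((3*int (j-2) - int (n + 3)) div 2) (mb (n + 3) (j - 2))"
        using 5 False by simp
      show "j < 2 \<Longrightarrow> mb (n + 3) (j - 2) = 0" by simp
      show "3 ^ 3 dvd (108::int)" by simp
      show "2 \<le> j \<Longrightarrow> ?A \<le> (3*int (j-2) - int (n + 3)) div 2 + int 3"
        by presburger
    qed
    have t3: "D ?A (81 * mb (n + 3) (j - 3))"
    proof (rule termD[where d=3 and p=4 and B="(3*int (j-3) - int (n + 3)) div 2"])
      show "3 \<le> j \<Longrightarrow> D ((3*int (j-3) - int (n + 3)) div 2) (mb (n + 3) (j - 3))"
        using 5 False by simp
      show "j < 3 \<Longrightarrow> mb (n + 3) (j - 3) = 0" by simp
      show "3 ^ 4 dvd (81::int)" by simp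
      show "3 \<le> j \<Longrightarrow> ?A \<le> (3*int (j-3) - int (n + 3)) div 2 + int 4"
        by presburger
    qed
    have t4: "D ?A (12 * mb (n + 2) (j - 1))"
    proof (rule termD[where d=1 and p=1 and B="(3*int (j-1) - int (n + 2)) div 2"])
      show "1 \<le> j \<Longrightarrow> D ((3*int (j-1) - int (n + 2)) div 2) (mb (n + 2) (j - 1))"
        using 5 False by simp
      show "j < 1 \<Longrightarrow> mb (n + 2) (j - 1) = 0" by simp
      show "3 ^ 1 dvd (12::int)" by simp
      show "1 \<le> j \<Longrightarrow> ?A \<le> (3*int (j-1) - int (n + 2)) div 2 + int 1"
        by presburger
    qed
    have t5: "D ?A (9 * mb (n + 2) (j - 2))"
    proof (rule termD[where d=2 and p=2 and B="(3*int (j-2) - int (n + 2)) div 2"])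
      show "2 \<le> j \<Longrightarrow> D ((3*int (j-2) - int (n + 2)) div 2) (mb (n + 2) (j - 2))"
        using 5 False by simp
      show "j < 2 \<Longrightarrow> mb (n + 2) (j - 2) = 0" by simp
      show "3 ^ 2 dvd (9::int)" by simp
      show "2 \<le> j \<Longrightarrow> ?A \<le> (3*int (j-2) - int (n + 2)) div 2 + int 2"
        by presburger
    qed
    have t6: "D ?A (1 * mb (n + 1) (j - 1))"
    proof (rule termD[where d=1 and p=0 and B="(3*int (j-1) - int (n + 1)) div 2"])
      show "1 \<le> j \<Longrightarrow> D ((3*int (j-1) - int (n + 1)) div 2) (mb (n + 1) (j - 1))"
        using 5 False by simp
      show "j < 1 \<Longrightarrow> mb (n + 1) (j - 1) = 0" by simp
      show "3 ^ 0 dvd (1::int)" by simp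
      show "1 \<le> j \<Longrightarrow> ?A \<le> (3*int (j-1) - int (n + 1)) div 2 + int 0"
        by presburger
    qed
    have "D ?A (30 * mb (n + 3) (j - 1) - 108 * mb (n + 3) (j - 2) + 81 * mb (n + 3) (j - 3)
      - 12 * mb (n + 2) (j - 1) + 9 * mb (n + 2) (j - 2) + 1 * mb (n + 1) (j - 1))"
      by (intro D_add D_diff t1 t2 t3 t4 t5 t6)
    then show ?thesis using False by simp
  qed
qed


lemma pi3_nonneg: "0 \<le> pi3 x"
  by (simp add: pi3_def)

lemma prime3: "prime_elem (3::int)"
  by (simp add: prime_elem_iff_prime_abs)

lemma pi3_mult: "x \<noteq> 0 \<Longrightarrow> y \<noteq> 0 \<Longrightarrow> pi3 (x*y) = pi3 x + pi3 y"
  by (simp add: pi3_def prime_elem_multiplicity_mult_distrib[OF prime3])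

lemma pi3_ge: assumes "D A x" shows "ereal (real_of_int A) \<le> pi3 x"
proof (cases "x = 0")
  case True then show ?thesis by (simp add: pi3_def)
next
  case False
  show ?thesis
  proof (cases "A < 0")
    case True
    then have "ereal (real_of_int A) \<le> 0" by simp
    then show ?thesis using pi3_nonneg order_trans by blast
  next
    case F2: False
    then have "3 ^ nat A dvd x" using assms unfolding D_def by simp
    then have "nat A \<le> multiplicity 3 x" using False by (intro multiplicity_geI) auto
    then show ?thesis using F2 False by (simp add: pi3_def)
  qed
qed

theorem corollary3p2:
  fixes i j :: nat
  assumes "1 \<le> i" and "1 \<le> j"
  shows "pi3 (mt i j) \<ge> (INF k \<in> {1..}. pi3 (ma i k) + pi3 (mb k j))
    \<and> (INF k \<in> {1..}. pi3 (ma i k) + pi3 (mb k j))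
        \<ge> (INF k \<in> {(1::nat)..}. ereal (real_of_int
              (\<lfloor>(3 * real k - real i - 1) / 2\<rfloor> + \<lfloor>(3 * real j - real k) / 2\<rfloor>)))"
proof
  let ?m = "(INF k \<in> {1..}. pi3 (ma i k) + pi3 (mb k j))"
  show "?m \<le> pi3 (mt i j)"
  proof (cases "mt i j = 0")
    case True then show ?thesis by (simp add: pi3_def)
  next
    case False
    define v where "v = multiplicity 3 (mt i j)"
    show ?thesis
    proof (rule ccontr)
      assume "\<not> ?m \<le> pi3 (mt i j)"
      then have lt: "ereal (real v) < ?m" using False by (simp add: pi3_def v_def)
      have "3 ^ Suc v dvd ma i k * mb k j" if "k \<in> {k. 1 \<le> k \<and> ma i k * mb k j \<noteq> 0}" for k
      proof -
        from that have k1: "k \<in> {1..}" and nz: "ma i k \<noteq> 0" "mb k j \<noteq> 0" by auto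
        have "?m \<le> pi3 (ma i k) + pi3 (mb k j)" using k1 by (rule INF_lower)
        also have "\<dots> = pi3 (ma i k * mb k j)" using nz by (simp add: pi3_mult)
        also have "\<dots> = ereal (real (multiplicity 3 (ma i k * mb k j)))" using nz by (simp add: pi3_def)
        finally have c: "?m \<le> ereal (real (multiplicity 3 (ma i k * mb k j)))" .
        have "ereal (real v) < ereal (real (multiplicity 3 (ma i k * mb k j)))"
          using lt c by (rule order_less_le_trans)
        then have "real v < real (multiplicity 3 (ma i k * mb k j))" by simp
        then have "Suc v \<le> multiplicity 3 (ma i k * mb k j)" by simp
        then show ?thesis by (rule multiplicity_dvd')
      qed
      then have "3 ^ Suc v dvd mt i j" unfolding mt_def by (rule dvd_sum)
      then have "Suc v \<le> v" unfolding v_def using False by (intro multiplicity_geI) auto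
      then show False by simp
    qed
  qed
next
  show "(INF k \<in> {(1::nat)..}. ereal (real_of_int
              (\<lfloor>(3 * real k - real i - 1) / 2\<rfloor> + \<lfloor>(3 * real j - real k) / 2\<rfloor>)))
     \<le> (INF k \<in> {1..}. pi3 (ma i k) + pi3 (mb k j))"
  proof (rule INF_mono)
    fix k :: nat assume k: "k \<in> {1..}"
    have f1: "\<lfloor>(3 * real k - real i - 1) / 2\<rfloor> = (3 * int k - int i - 1) div 2"
    proof -
      have "(3 * real k - real i - 1) / 2 = real_of_int (3 * int k - int i - 1) / real_of_int 2" by simp
      then show ?thesis by (simp only: floor_divide_of_int_eq)
    qed
    have f2: "\<lfloor>(3 * real j - real k) / 2\<rfloor> = (3 * int j - int k) div 2"
    proof -
      have "(3 * real j - real k) / 2 = real_of_int (3 * int j - int k) / real_of_int 2" by simp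
      then show ?thesis by (simp only: floor_divide_of_int_eq)
    qed
    have "ereal (real_of_int ((3 * int k - int i - 1) div 2 + (3 * int j - int k) div 2))
       = ereal (real_of_int ((3 * int k - int i - 1) div 2)) + ereal (real_of_int ((3 * int j - int k) div 2))"
      by simp
    also have "\<dots> \<le> pi3 (ma i k) + pi3 (mb k j)"
      using k assms by (intro add_mono pi3_ge a_dvd b_dvd) auto
    finally have c: "ereal (real_of_int ((3 * int k - int i - 1) div 2 + (3 * int j - int k) div 2))
       \<le> pi3 (ma i k) + pi3 (mb k j)" .
    have "ereal (real_of_int
              (\<lfloor>(3 * real k - real i - 1) / 2\<rfloor> + \<lfloor>(3 * real j - real k) / 2\<rfloor>))
        \<le> pi3 (ma i k) + pi3 (mb k j)" unfolding f1 f2 by (rule c)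
    then show "\<exists>k'\<in>{1..}. ereal (real_of_int
              (\<lfloor>(3 * real k' - real i - 1) / 2\<rfloor> + \<lfloor>(3 * real j - real k') / 2\<rfloor>))
        \<le> pi3 (ma i k) + pi3 (mb k j)" using k by blast
  qed
qed

end
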